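(* Let $0<p<1$ and $1<\alpha<2$, and let $\mu,\nu$ be real numbers with $\alpha-2<\mu,\nu<0$ satisfying $$\mu+\nu=\alpha-2,\qquad p\sin(\pi\mu)=(1-p)\sin(\pi\nu).$$ Then for $t\in(0,1)$ and every $k=0,1,2,\ldots$, $$\mathcal{I}_{p,0,1}^{\mu,\nu,2-\alpha}\big[t^{\nu}(1-t)^{\mu}t^{k}\big]=\sum_{j=0}^{k}a_{k,j}t^{j},\qquad a_{k,j}=(-1)^{k}\frac{(-1)^{j}\Gamma(j+\alpha-1)\Gamma(\mu+1)}{\Gamma(\alpha-1-\nu-k+j)\Gamma(j+1)\Gamma(k+1-j)}.$$
   Context: For $\sigma>0$ and an interval $(a,b)$, the left and right Riemann–Liouville fractional integrals are ${}_{a}I_x^{\sigma}v(x)=\frac{1}{\Gamma(\sigma)}\int_a^x (x-y)^{\sigma-1}v(y)\,dy$ and ${}_{x}I_b^{\sigma}v(x)=\frac{1}{\Gamma(\sigma)}\int_x^b (y-x)^{\sigma-1}v(y)\,dy$. With $C_{\alpha,p}:=(\sin\pi\mu+\sin\pi\nu)/\sin\pi\alpha$, the two-sided fractional integral of order $\varrho>0$ on $(a,b)$ is $\mathcal{I}_{p,a,b}^{\mu,\nu,\varrho}v:=C_{\alpha,p}\big(p\,{}_{a}I_x^{\varrho}v+(1-p)\,{}_{x}I_b^{\varrho}v\big)$. *)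

theory Defs
  imports "HOL-Analysis.Analysis"
begin

definition RL_left :: "real \<Rightarrow> real \<Rightarrow> (real \<Rightarrow> real) \<Rightarrow> real \<Rightarrow> real" where
  "RL_left a \<sigma> v x =
     (1 / Gamma \<sigma>) * (\<integral>y\<in>{a<..<x}. (x - y) powr (\<sigma> - 1) * v y \<partial>lborel)"

definition RL_right :: "real \<Rightarrow> real \<Rightarrow> (real \<Rightarrow> real) \<Rightarrow> real \<Rightarrow> real" where
  "RL_right b \<sigma> v x =
     (1 / Gamma \<sigma>) * (\<integral>y\<in>{x<..<b}. (y - x) powr (\<sigma> - 1) * v y \<partial>lborel)"

definition C_const :: "real \<Rightarrow> real \<Rightarrow> real \<Rightarrow> real" where
  "C_const \<alpha> \<mu> \<nu> = (sin (pi * \<mu>) + sin (pi * \<nu>)) / sin (pi * \<alpha>)"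

definition two_sided_int ::
  "real \<Rightarrow> real \<Rightarrow> real \<Rightarrow> real \<Rightarrow> real \<Rightarrow> real \<Rightarrow> real \<Rightarrow> (real \<Rightarrow> real) \<Rightarrow> real \<Rightarrow> real" where
  "two_sided_int p a b \<alpha> \<mu> \<nu> \<rho> v x =
     C_const \<alpha> \<mu> \<nu> * (p * RL_left a \<rho> v x + (1 - p) * RL_right b \<rho> v x)"

end

theory Submission
  imports Defs
begin

lemma Gamma_reflection_real:
  fixes z :: real
  shows "Gamma z * Gamma (1 - z) = pi / sin (pi * z)"
proof -
  have e1: "complex_of_real (1 - z) = 1 - complex_of_real z" by simp
  have "complex_of_real (Gamma z * Gamma (1 - z)) = Gamma (complex_of_real z) * Gamma (complex_of_real (1 - z))"
    by (simp only: of_real_mult Gamma_complex_of_real)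
  also have "\<dots> = Gamma (complex_of_real z) * Gamma (1 - complex_of_real z)" by (simp only: e1)
  also have "\<dots> = of_real pi / sin (of_real pi * of_real z)" by (rule Gamma_reflection_complex)
  also have "\<dots> = complex_of_real (pi / sin (pi * z))"
    by (simp only: of_real_mult[symmetric] sin_of_real of_real_divide)
  finally show ?thesis by (simp only: of_real_eq_iff)
qed

lemma Kint:
  fixes c b :: real
  assumes c: "-1 < c" "c < 0" and b: "b > 0"
  shows "(\<lambda>v. v powr c / (v + b)) absolutely_integrable_on {0<..} \<and>
         integral {0<..} (\<lambda>v. v powr c / (v + b)) = b powr c * (- pi / sin (pi * c))"
proof -
  define g where "g = (\<lambda>x::real. b * x / (1 - x))"
  define g' where "g' = (\<lambda>x::real. b / (1 - x)^2)"
  have der: "(g has_field_derivative g' x) (at x within {0<..<1})" if "x \<in> {0<..<1}" for x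
    using that unfolding g_def g'_def
    by (auto intro!: derivative_eq_intros simp: field_simps power2_eq_square)
  have inj: "inj_on g {0<..<1}"
    unfolding g_def inj_on_def using b by (auto simp: field_simps)
  have img: "g ` {0<..<1} = {0<..}"
  proof
    show "g ` {0<..<1} \<subseteq> {0<..}" using b by (auto simp: g_def)
    show "{0<..} \<subseteq> g ` {0<..<1}"
    proof
      fix v :: real assume "v \<in> {0<..}"
      hence v: "v > 0" by simp
      have "g (v / (v + b)) = v" using v b by (simp add: g_def divide_simps)
      moreover have "v / (v + b) \<in> {0<..<1}" using v b by auto
      ultimately show "v \<in> g ` {0<..<1}" by (metis image_eqI)
    qed
  qed
  have eq: "\<bar>g' x\<bar> * ((g x) powr c / (g x + b)) = b powr c * (x powr (c + 1 - 1) * (1 - x) powr (- c - 1))"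
    if "x \<in> {0<..<1}" for x
  proof -
    from that have x: "0 < x" "x < 1" by auto
    have "g x + b = b / (1 - x)" using x b by (simp add: g_def field_simps)
    moreover have "(g x) powr c = b powr c * x powr c * (1 - x) powr (- c)"
      using x b by (simp add: g_def powr_divide powr_mult powr_minus_divide)
    moreover have "\<bar>g' x\<bar> = b / (1 - x)^2" using x b by (simp add: g'_def)
    moreover have "\<And>A d. d > 0 \<Longrightarrow> b / d^2 * (A / (b / d)) = A / d"
      using b by (simp add: field_simps power2_eq_square)
    note this[of "1 - x" "b powr c * x powr c * (1 - x) powr (-c)"]
    ultimately have "\<bar>g' x\<bar> * ((g x) powr c / (g x + b)) = b powr c * x powr c * (1 - x) powr (-c) / (1 - x)"
      using x by simp
    also have "\<dots> = b powr c * (x powr c * (1 - x) powr (-c - 1))"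
    proof -
      have "(1-x) powr (-c-1) = (1-x) powr (-c) / (1-x)" using x by (simp add: powr_diff)
      thus ?thesis by (simp only: times_divide_eq_right mult.assoc)
    qed
    finally show ?thesis by simp
  qed
  have B: "((\<lambda>x. x powr (c + 1 - 1) * (1 - x) powr (- c - 1)) has_integral Beta (c + 1) (- c)) {0..1}"
    using has_integral_Beta_real[of "c+1" "-c"] c by simp
  hence B': "((\<lambda>x. x powr (c + 1 - 1) * (1 - x) powr (- c - 1)) has_integral Beta (c + 1) (- c)) {0<..<1}"
    by (simp add: has_integral_Icc_iff_Ioo)
  have Bval: "Beta (c + 1) (- c) = - pi / sin (pi * c)"
  proof -
    have "Beta (c + 1) (- c) = Gamma (c + 1) * Gamma (1 - (c + 1))"
      by (simp add: Beta_def)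
    also have "\<dots> = pi / sin (pi * (c + 1))" by (rule Gamma_reflection_real)
    also have "sin (pi * (c + 1)) = - sin (pi * c)" by (simp add: distrib_left sin_add)
    finally show ?thesis by simp
  qed
  have B2: "((\<lambda>x. \<bar>g' x\<bar> * ((g x) powr c / (g x + b))) has_integral (b powr c * Beta (c + 1) (- c))) {0<..<1}"
    using has_integral_mult_right[OF B', of "b powr c"] eq by (subst has_integral_cong) auto
  have nn: "0 \<le> \<bar>g' x\<bar> * ((g x) powr c / (g x + b))" if "x \<in> {0<..<1}" for x
    using that b by (auto simp: g_def intro!: mult_nonneg_nonneg divide_nonneg_pos)
  have "(\<lambda>x. \<bar>g' x\<bar> * ((g x) powr c / (g x + b))) absolutely_integrable_on {0<..<1} \<and>
        integral {0<..<1} (\<lambda>x. \<bar>g' x\<bar> * ((g x) powr c / (g x + b))) = b powr c * Beta (c + 1) (- c)"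
    using B2 nn by (meson has_integral_integrable_integral nonnegative_absolutely_integrable_1 has_integral_iff)
  hence H: "(\<lambda>v. v powr c / (v + b)) absolutely_integrable_on g ` {0<..<1} \<and>
     integral (g ` {0<..<1}) (\<lambda>v. v powr c / (v + b)) = b powr c * Beta (c + 1) (- c)"
    using has_absolute_integral_change_of_variables_1'[of "{0<..<1}" g g' "\<lambda>v. v powr c / (v + b)" "b powr c * Beta (c + 1) (- c)"] der inj
    by auto
  show ?thesis using H unfolding img Bval by simp
qed

lemma Kint':
  fixes c b :: real
  assumes "-1 < c" "c < 0" "b > 0"
  shows "((\<lambda>v. v powr c / (v + b)) has_integral (b powr c * (- pi / sin (pi * c)))) {0<..}"
  using Kint[OF assms] set_lebesgue_integral_eq_integral(1)
  by (metis has_integral_integrable_integral)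

lemma nn_to_hi:
  fixes f :: "real \<Rightarrow> real"
  assumes "f \<in> borel_measurable borel" "\<And>x. x \<in> S \<Longrightarrow> 0 \<le> f x" "S \<in> sets borel"
    "(\<integral>\<^sup>+x. ennreal (f x) * indicator S x \<partial>lborel) = ennreal r" "0 \<le> r"
  shows "(f has_integral r) S"
proof -
  have "((\<lambda>x. indicator S x * f x) has_integral r) UNIV"
  proof (rule nn_integral_has_integral)
    show "(\<lambda>x. indicator S x * f x) \<in> borel_measurable borel" using assms by measurable
    show "0 \<le> indicator S x * f x" for x using assms(2) by (auto simp: indicator_def)
    have "(\<lambda>x. ennreal (indicator S x * f x)) = (\<lambda>x. ennreal (f x) * indicator S x)"
      by (auto simp: indicator_def fun_eq_iff)
    thus "(\<integral>\<^sup>+x. ennreal (indicator S x * f x) \<partial>lborel) = ennreal r" using assms(4) by simp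
  qed (use assms in auto)
  moreover have "(\<lambda>x. indicator S x * f x) = (\<lambda>x. if x \<in> S then f x else 0)"
    by (auto simp: indicator_def fun_eq_iff)
  ultimately show ?thesis by (simp add: has_integral_restrict_UNIV)
qed

definition Kc :: "real \<Rightarrow> real" where "Kc c = - pi / sin (pi * c)"

lemma Kc_pos: "-1 < c \<Longrightarrow> c < 0 \<Longrightarrow> Kc c > 0"
proof -
  assume c: "-1 < c" "c < 0"
  have "sin (pi * c) < 0"
  proof -
    have "0 < pi * (- c)" using c by (simp add: mult_pos_neg)
    moreover have "pi * (- c) < pi * 1" using c by (intro mult_strict_left_mono) auto
    ultimately have "sin (pi * (- c)) > 0" by (intro sin_gt_zero) auto
    thus ?thesis by simp
  qed
  hence "pi / sin (pi * c) < 0" by (rule divide_pos_neg[OF pi_gt_zero])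
  thus ?thesis by (simp add: Kc_def)
qed


lemma frac_aux1: fixes A x e b :: real assumes "x + e \<noteq> 0" "x + b \<noteq> 0" "b \<noteq> e"
  shows "(A/(x+e) - A/(x+b)) * (1/(b-e)) = A/((x+e)*(x+b))"
proof -
  have "A/(x+e) - A/(x+b) = A*(b-e)/((x+e)*(x+b))" using assms by (simp add: divide_simps) (simp add: algebra_simps)
  thus ?thesis using assms by simp
qed

lemma val_aux: fixes P R K d :: real shows "(P*K - R*K) * (1/d) = K*(P - R)/d"
  by (simp add: diff_divide_distrib right_diff_distrib mult.commute)

lemma pf_int:
  fixes \<nu> e b :: real
  assumes nu: "-1 < \<nu>" "\<nu> < 0" and e: "0 < e" "e < b"
  shows "((\<lambda>x. x powr \<nu> / ((x + e) * (x + b))) has_integral (Kc \<nu> * (e powr \<nu> - b powr \<nu>) / (b - e))) {0<..}"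
proof -
  have H: "((\<lambda>x. (x powr \<nu> / (x + e) - x powr \<nu> / (x + b)) * (1 / (b - e))) has_integral
        ((e powr \<nu> * Kc \<nu> - b powr \<nu> * Kc \<nu>) * (1 / (b - e)))) {0<..}"
    using Kint'[OF nu, of e] Kint'[OF nu, of b] e
    by (intro has_integral_mult_left has_integral_diff) (auto simp: Kc_def)
  have Eq: "(x powr \<nu> / (x + e) - x powr \<nu> / (x + b)) * (1 / (b - e)) = x powr \<nu> / ((x + e) * (x + b))"
    if "x \<in> {0<..}" for x
  proof -
    have nz: "x + e \<noteq> 0" "x + b \<noteq> 0" "b \<noteq> e" using that e by auto
    show ?thesis using nz by (rule frac_aux1)
  qed
  have HH: "((\<lambda>x. x powr \<nu> / ((x + e) * (x + b))) has_integral
        ((e powr \<nu> * Kc \<nu> - b powr \<nu> * Kc \<nu>) * (1 / (b - e)))) {0<..}"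
    by (rule has_integral_eq[OF _ H]) (rule Eq)
  have V: "(e powr \<nu> * Kc \<nu> - b powr \<nu> * Kc \<nu>) * (1 / (b - e)) = Kc \<nu> * (e powr \<nu> - b powr \<nu>) / (b - e)"
    by (rule val_aux)
  show ?thesis using HH unfolding V .
qed

lemma core:
  fixes \<mu> \<nu> e :: real
  assumes mu: "-1 < \<mu>" "\<mu> < 0" and nu: "-1 < \<nu>" "\<nu> < 0" and e: "0 < e" "e < 1"
  obtains Q P where "((\<lambda>v. v powr \<nu> * (1 + v) powr \<mu> / (v + e)) has_integral Q) {0<..}"
    "((\<lambda>v. v powr \<mu> * (1 + v) powr \<nu> / (v + (1 - e))) has_integral P) {0<..}"
    "Q / Kc \<nu> + P / Kc \<mu> = e powr \<nu> * (1 - e) powr \<mu>"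
proof -
  define S where "S = ({0<..} :: real set)"
  have Sb: "S \<in> sets borel" by (simp add: S_def)
  have Kmu: "Kc \<mu> > 0" and Knu: "Kc \<nu> > 0" using Kc_pos mu nu by auto
  define F where "F = (\<lambda>x y::real. ennreal (x powr \<nu> / (x + e) * (y powr \<mu> / (y + (1 + x))))
      * indicator S x * indicator S y)"
  have Fm: "(\<lambda>(x, y). F x y) \<in> borel_measurable (lborel \<Otimes>\<^sub>M lborel)" unfolding F_def S_def by measurable
  have inner_r: "(\<integral>\<^sup>+ y. F v y \<partial>lborel) = ennreal (v powr \<nu> * (1 + v) powr \<mu> / (v + e) * Kc \<mu>) * indicator S v" for v
  proof (cases "v \<in> S")
    case True
    hence v: "v > 0" by (simp add: S_def)
    have "(\<integral>\<^sup>+ y. F v y \<partial>lborel) = (\<integral>\<^sup>+ y. ennreal (v powr \<nu> / (v + e)) * (ennreal (y powr \<mu> / (y + (1 + v))) * indicator S y) \<partial>lborel)"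
      using True v e by (intro nn_integral_cong) (auto simp: F_def S_def indicator_def, subst ennreal_mult[symmetric], auto)
    also have "\<dots> = ennreal (v powr \<nu> / (v + e)) * (\<integral>\<^sup>+ y. ennreal (y powr \<mu> / (y + (1 + v))) * indicator S y \<partial>lborel)"
      by (rule nn_integral_cmult) (simp add: S_def)
    also have "(\<integral>\<^sup>+ y. ennreal (y powr \<mu> / (y + (1 + v))) * indicator S y \<partial>lborel) = ennreal ((1 + v) powr \<mu> * Kc \<mu>)"
      using nn_integral_has_integral_lebesgue'[OF _ Kint'[OF mu, of "1 + v"]] v
      by (simp add: S_def Kc_def)
    finally show ?thesis using True v e Kmu by (simp add: ennreal_mult[symmetric] mult_ac)
  next
    case False thus ?thesis by (simp add: F_def)
  qed
  have inner_v: "(\<integral>\<^sup>+ x. F x r \<partial>lborel) = ennreal (r powr \<mu> * (Kc \<nu> * (e powr \<nu> - (1 + r) powr \<nu>) / (1 + r - e))) * indicator S r" for r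
  proof (cases "r \<in> S")
    case True
    hence r: "r > 0" by (simp add: S_def)
    have "(\<integral>\<^sup>+ x. F x r \<partial>lborel) = (\<integral>\<^sup>+ x. ennreal (r powr \<mu>) * (ennreal (x powr \<nu> / ((x + e) * (x + (1 + r)))) * indicator S x) \<partial>lborel)"
      using True r e by (intro nn_integral_cong) (auto simp: F_def S_def indicator_def ennreal_mult[symmetric] field_simps)
    also have "\<dots> = ennreal (r powr \<mu>) * (\<integral>\<^sup>+ x. ennreal (x powr \<nu> / ((x + e) * (x + (1 + r)))) * indicator S x \<partial>lborel)"
      by (rule nn_integral_cmult) (simp add: S_def)
    also have "(\<integral>\<^sup>+ x. ennreal (x powr \<nu> / ((x + e) * (x + (1 + r)))) * indicator S x \<partial>lborel) = ennreal (Kc \<nu> * (e powr \<nu> - (1 + r) powr \<nu>) / (1 + r - e))"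
      using nn_integral_has_integral_lebesgue'[OF _ pf_int[OF nu, of e "1 + r"]] r e
      by (simp add: S_def)
    finally have A1: "(\<integral>\<^sup>+ x. F x r \<partial>lborel) = ennreal (r powr \<mu>) * ennreal (Kc \<nu> * (e powr \<nu> - (1 + r) powr \<nu>) / (1 + r - e))" .
    have "e powr \<nu> - (1 + r) powr \<nu> \<ge> 0"
      using r e nu by (auto intro!: powr_less_mono2_neg less_imp_le)
    hence "ennreal (r powr \<mu>) * ennreal (Kc \<nu> * (e powr \<nu> - (1 + r) powr \<nu>) / (1 + r - e)) =
       ennreal (r powr \<mu> * (Kc \<nu> * (e powr \<nu> - (1 + r) powr \<nu>) / (1 + r - e)))"
      using r e Knu by (intro ennreal_mult[symmetric]) auto
    thus ?thesis using A1 True by simp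
  next
    case False thus ?thesis by (simp add: F_def)
  qed
  have Fub: "(\<integral>\<^sup>+ y. (\<integral>\<^sup>+ x. F x y \<partial>lborel) \<partial>lborel) = (\<integral>\<^sup>+ x. (\<integral>\<^sup>+ y. F x y \<partial>lborel) \<partial>lborel)"
    by (rule lborel_pair.Fubini'[OF Fm])
  define p where "p = (\<lambda>r::real. r powr \<mu> * (1 + r) powr \<nu> / (r + (1 - e)))"
  define q where "q = (\<lambda>v::real. v powr \<nu> * (1 + v) powr \<mu> / (v + e))"
  have pm: "p \<in> borel_measurable borel" unfolding p_def by measurable
  have qm: "q \<in> borel_measurable borel" unfolding q_def by measurable
  have pnn: "0 \<le> p r" if "r \<in> S" for r using that e by (auto simp: p_def S_def)
  have qnn: "0 \<le> q r" if "r \<in> S" for r using that e by (auto simp: q_def S_def)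
  have Pint0: "((\<lambda>r. r powr \<mu> / (r + (1 - e))) has_integral ((1 - e) powr \<mu> * Kc \<mu>)) S"
    using Kint'[OF mu, of "1 - e"] e by (simp add: S_def Kc_def)
  have Pint0n: "(\<integral>\<^sup>+r. ennreal (r powr \<mu> / (r + (1 - e))) * indicator S r \<partial>lborel) = ennreal ((1 - e) powr \<mu> * Kc \<mu>)"
    by (rule nn_integral_has_integral_lebesgue'[OF _ Pint0]) (use e in \<open>auto simp: S_def\<close>)
  have "(\<integral>\<^sup>+r. ennreal (p r) * indicator S r \<partial>lborel) \<le> (\<integral>\<^sup>+r. ennreal (r powr \<mu> / (r + (1 - e))) * indicator S r \<partial>lborel)"
  proof (rule nn_integral_mono)
    fix r :: real
    show "ennreal (p r) * indicator S r \<le> ennreal (r powr \<mu> / (r + (1 - e))) * indicator S r"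
    proof (cases "r \<in> S")
      case True
      hence r: "r > 0" by (simp add: S_def)
      have "(1 + r) powr \<nu> \<le> (1 + r) powr 0" using r nu by (intro powr_mono) auto
      hence "(1 + r) powr \<nu> \<le> 1" using r by simp
      hence "r powr \<mu> * (1 + r) powr \<nu> \<le> r powr \<mu> * 1" by (intro mult_left_mono) auto
      hence "p r \<le> r powr \<mu> / (r + (1 - e))" unfolding p_def using r e by (intro divide_right_mono) auto
      thus ?thesis using True by (simp add: ennreal_leI)
    qed simp
  qed
  hence "(\<integral>\<^sup>+r. ennreal (p r) * indicator S r \<partial>lborel) < top" using Pint0n by (simp add: le_less_trans)
  then obtain P0 where P0: "(\<integral>\<^sup>+r. ennreal (p r) * indicator S r \<partial>lborel) = ennreal P0" "P0 \<ge> 0"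
    by (cases "(\<integral>\<^sup>+r. ennreal (p r) * indicator S r \<partial>lborel)" rule: ennreal_cases) auto
  have Pint: "(p has_integral P0) S" by (rule nn_to_hi[OF pm pnn Sb P0])
  define g where "g = (\<lambda>r::real. r powr \<mu> * (Kc \<nu> * (e powr \<nu> - (1 + r) powr \<nu>) / (1 + r - e)))"
  have gI: "((\<lambda>r. (e powr \<nu> * (r powr \<mu> / (r + (1 - e))) - p r) * Kc \<nu>) has_integral
      ((e powr \<nu> * ((1 - e) powr \<mu> * Kc \<mu>) - P0) * Kc \<nu>)) S"
    by (intro has_integral_mult_left has_integral_diff has_integral_mult_right Pint0 Pint)
  have gI2: "(g has_integral ((e powr \<nu> * ((1 - e) powr \<mu> * Kc \<mu>) - P0) * Kc \<nu>)) S"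
  proof (rule has_integral_eq[OF _ gI])
    fix r assume "r \<in> S"
    hence r: "r > 0" by (simp add: S_def)
    have "1 + r - e = r + (1 - e)" by simp
    thus "(e powr \<nu> * (r powr \<mu> / (r + (1 - e))) - p r) * Kc \<nu> = g r"
      unfolding g_def p_def by (simp add: field_simps) (simp add: diff_divide_distrib)
  qed
  have gnn: "0 \<le> g r" if "r \<in> S" for r
  proof -
    from that have r: "r > 0" by (simp add: S_def)
    have "e powr \<nu> - (1 + r) powr \<nu> \<ge> 0"
      using r e nu by (auto intro!: powr_less_mono2_neg less_imp_le)
    thus ?thesis using r e Knu unfolding g_def by (auto intro!: mult_nonneg_nonneg divide_nonneg_pos)
  qed
  have LHS: "(\<integral>\<^sup>+ y. (\<integral>\<^sup>+ x. F x y \<partial>lborel) \<partial>lborel) = ennreal ((e powr \<nu> * ((1 - e) powr \<mu> * Kc \<mu>) - P0) * Kc \<nu>)"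
  proof -
    have "(\<integral>\<^sup>+ y. (\<integral>\<^sup>+ x. F x y \<partial>lborel) \<partial>lborel) = (\<integral>\<^sup>+ y. ennreal (g y) * indicator S y \<partial>lborel)"
      by (simp add: inner_v g_def)
    also have "\<dots> = ennreal ((e powr \<nu> * ((1 - e) powr \<mu> * Kc \<mu>) - P0) * Kc \<nu>)"
      by (rule nn_integral_has_integral_lebesgue'[OF gnn gI2])
    finally show ?thesis .
  qed
  have RHS: "(\<integral>\<^sup>+ x. (\<integral>\<^sup>+ y. F x y \<partial>lborel) \<partial>lborel) = ennreal (Kc \<mu>) * (\<integral>\<^sup>+ v. ennreal (q v) * indicator S v \<partial>lborel)"
  proof -
    have "(\<integral>\<^sup>+ x. (\<integral>\<^sup>+ y. F x y \<partial>lborel) \<partial>lborel) = (\<integral>\<^sup>+ v. ennreal (Kc \<mu>) * (ennreal (q v) * indicator S v) \<partial>lborel)"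
    proof (rule nn_integral_cong)
      fix v :: real
      show "(\<integral>\<^sup>+ y. F v y \<partial>lborel) = ennreal (Kc \<mu>) * (ennreal (q v) * indicator S v)"
      proof (cases "v \<in> S")
        case True
        hence "0 \<le> q v" by (rule qnn)
        hence "ennreal (q v * Kc \<mu>) = ennreal (Kc \<mu>) * ennreal (q v)" using Kmu by (simp add: ennreal_mult mult.commute)
        thus ?thesis using True by (simp add: inner_r q_def)
      qed (simp add: inner_r)
    qed
    also have "\<dots> = ennreal (Kc \<mu>) * (\<integral>\<^sup>+ v. ennreal (q v) * indicator S v \<partial>lborel)"
      by (rule nn_integral_cmult) (unfold S_def q_def, measurable)
    finally show ?thesis .
  qed
  have X: "ennreal (Kc \<mu>) * (\<integral>\<^sup>+ v. ennreal (q v) * indicator S v \<partial>lborel) = ennreal ((e powr \<nu> * ((1 - e) powr \<mu> * Kc \<mu>) - P0) * Kc \<nu>)"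
    using Fub LHS RHS by simp
  hence "(\<integral>\<^sup>+ v. ennreal (q v) * indicator S v \<partial>lborel) \<noteq> top" using Kmu
    by (auto simp: ennreal_mult_eq_top_iff)
  then obtain Q0 where Q0: "(\<integral>\<^sup>+v. ennreal (q v) * indicator S v \<partial>lborel) = ennreal Q0" "Q0 \<ge> 0"
    by (cases "(\<integral>\<^sup>+v. ennreal (q v) * indicator S v \<partial>lborel)" rule: ennreal_cases) auto
  have Qint: "(q has_integral Q0) S" by (rule nn_to_hi[OF qm qnn Sb Q0])
  have "ennreal (Kc \<mu> * Q0) = ennreal ((e powr \<nu> * ((1 - e) powr \<mu> * Kc \<mu>) - P0) * Kc \<nu>)"
    using X Q0 Kmu by (simp add: ennreal_mult)
  moreover have "(e powr \<nu> * ((1 - e) powr \<mu> * Kc \<mu>) - P0) * Kc \<nu> \<ge> 0"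
    using gI2 gnn by (intro has_integral_nonneg[OF gI2]) (auto)
  ultimately have KQ: "Kc \<mu> * Q0 = (e powr \<nu> * ((1 - e) powr \<mu> * Kc \<mu>) - P0) * Kc \<nu>"
    using Kmu Q0(2) by (subst (asm) ennreal_inj) auto
  have fin: "Q0 / Kc \<nu> + P0 / Kc \<mu> = e powr \<nu> * (1 - e) powr \<mu>"
  proof -
    have "Q0 / Kc \<nu> + P0 / Kc \<mu> = (Kc \<mu> * Q0 + Kc \<nu> * P0) / (Kc \<mu> * Kc \<nu>)"
      using Kmu Knu by (simp add: field_simps)
    also have "Kc \<mu> * Q0 + Kc \<nu> * P0 = e powr \<nu> * (1 - e) powr \<mu> * (Kc \<mu> * Kc \<nu>)"
      using KQ by (simp add: algebra_simps)
    finally show ?thesis using Kmu Knu by simp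
  qed
  show ?thesis
    by (rule that[of Q0 P0]) (use Qint Pint fin in \<open>auto simp: q_def p_def S_def\<close>)
qed


lemma cov_nonneg:
  fixes f g g' :: "real \<Rightarrow> real"
  assumes S: "S \<in> sets lebesgue"
    and der: "\<And>x. x \<in> S \<Longrightarrow> (g has_field_derivative g' x) (at x within S)"
    and inj: "inj_on g S"
    and I: "((\<lambda>x. \<bar>g' x\<bar> * f (g x)) has_integral I) S"
    and nn: "\<And>x. x \<in> S \<Longrightarrow> 0 \<le> \<bar>g' x\<bar> * f (g x)"
  shows "(f has_integral I) (g ` S)"
proof -
  have "(\<lambda>x. \<bar>g' x\<bar> * f (g x)) absolutely_integrable_on S \<and> integral S (\<lambda>x. \<bar>g' x\<bar> * f (g x)) = I"
    using I nn by (meson has_integral_integrable_integral nonnegative_absolutely_integrable_1 has_integral_iff)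
  hence "f absolutely_integrable_on (g ` S) \<and> integral (g ` S) f = I"
    using has_absolute_integral_change_of_variables_1'[of S g g' f I] S der inj by auto
  thus ?thesis using set_lebesgue_integral_eq_integral(1)
    by (metis has_integral_integrable_integral)
qed

lemma moebL:
  fixes t c \<mu> \<nu> Q :: real
  assumes t: "0 < t" "t < 1" and c: "1 < c"
    and Q: "((\<lambda>v. v powr \<nu> * (1 + v) powr \<mu> / (v + c * (1 - t) / (c - t))) has_integral Q) {0<..}"
  shows "((\<lambda>y. (t - y) powr (- 1 - \<mu> - \<nu>) * (y powr \<nu> * (1 - y) powr \<mu> * (1 / (c - y))))
      has_integral (t powr (- \<mu>) * (1 - t) powr (- \<nu>) / (c - t) * Q)) {0<..<t}"
proof -
  define a where "a = 1 - t"
  have a: "0 < a" using t by (simp add: a_def)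
  define e where "e = c * a / (c - t)"
  have ct: "c - t > 0" using t c by simp
  have e: "e > 0" using a ct c by (simp add: e_def)
  define g where "g = (\<lambda>v::real. t * v / (v + a))"
  define g' where "g' = (\<lambda>v::real. t * a / (v + a)^2)"
  define f where "f = (\<lambda>y::real. (t - y) powr (- 1 - \<mu> - \<nu>) * (y powr \<nu> * (1 - y) powr \<mu> * (1 / (c - y))))"
  have der: "(g has_field_derivative g' x) (at x within {0<..})" if "x \<in> {0<..}" for x
    using that a unfolding g_def g'_def
    by (auto intro!: derivative_eq_intros simp: field_simps power2_eq_square)
  have inj: "inj_on g {0<..}"
    unfolding g_def inj_on_def using a t by (auto simp: field_simps)
  have img: "g ` {0<..} = {0<..<t}"
  proof
    show "g ` {0<..} \<subseteq> {0<..<t}" using a t by (auto simp: g_def field_simps)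
    show "{0<..<t} \<subseteq> g ` {0<..}"
    proof
      fix y :: real assume "y \<in> {0<..<t}"
      hence y: "0 < y" "y < t" by auto
      have "g (a * y / (t - y)) = y" using y a by (simp add: g_def divide_simps) (simp add: algebra_simps a_def)
      moreover have "a * y / (t - y) \<in> {0<..}" using y a by auto
      ultimately show "y \<in> g ` {0<..}" by (metis image_eqI)
    qed
  qed
  have eq: "\<bar>g' v\<bar> * f (g v) = t powr (- \<mu>) * a powr (- \<nu>) / (c - t) *
      (v powr \<nu> * (1 + v) powr \<mu> / (v + e))" if "v \<in> {0<..}" for v
  proof -
    from that have v: "v > 0" by simp
    define A where "A = v + a"
    have A: "A > 0" using v a by (simp add: A_def)
    have e1: "t - g v = t * a / A" using A by (simp add: g_def A_def field_simps)
    have e2: "g v = t * v / A" by (simp add: g_def A_def)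
    have e3: "1 - g v = a * (1 + v) / A" using A by (simp add: g_def A_def a_def field_simps)
    have "(c - t) * (v + e) = (c - t) * v + c * a" using ct by (simp add: e_def distrib_left)
    also have "\<dots> = c * A - t * v" by (simp add: A_def algebra_simps)
    finally have e4': "(c - t) * (v + e) = c * A - t * v" .
    have e4: "c - g v = (c - t) * (v + e) / A" unfolding e4' using A by (simp add: g_def A_def field_simps)
    have e5: "\<bar>g' v\<bar> = t * a / A^2" using A t a by (simp add: g'_def A_def)
    have p1: "(t - g v) powr (- 1 - \<mu> - \<nu>) = (t * a) powr (- 1 - \<mu> - \<nu>) / A powr (- 1 - \<mu> - \<nu>)"
      unfolding e1 using t a A by (simp add: powr_divide)
    have p2: "g v powr \<nu> = t powr \<nu> * v powr \<nu> / A powr \<nu>"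
      unfolding e2 using t v A by (simp add: powr_divide powr_mult)
    have p3: "(1 - g v) powr \<mu> = a powr \<mu> * (1 + v) powr \<mu> / A powr \<mu>"
      unfolding e3 using a v A by (simp add: powr_divide powr_mult)
    have pA: "A powr (- 1 - \<mu> - \<nu>) * A powr \<nu> * A powr \<mu> = 1 / A"
    proof -
      have "A powr (- 1 - \<mu> - \<nu>) * A powr \<nu> * A powr \<mu> = A powr (- 1 - \<mu> - \<nu> + \<nu> + \<mu>)"
        by (simp only: powr_add)
      also have "\<dots> = A powr (-1)" by (rule arg_cong[where f="\<lambda>z. A powr z"]) simp
      also have "\<dots> = 1 / A" using A by (simp add: powr_minus_divide abs_of_pos)
      finally show ?thesis .
    qed
    have pT: "(t * a) powr (- 1 - \<mu> - \<nu>) * t powr \<nu> * a powr \<mu> * (t * a) = t powr (- \<mu>) * a powr (- \<nu>)"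
    proof -
      have "(t * a) powr (- 1 - \<mu> - \<nu>) * t powr \<nu> * a powr \<mu> * (t * a)
          = (t powr (- 1 - \<mu> - \<nu>) * t powr \<nu> * t powr 1) * (a powr (- 1 - \<mu> - \<nu>) * a powr \<mu> * a powr 1)"
        using t a by (simp add: powr_mult mult_ac abs_of_pos)
      also have "\<dots> = t powr (- 1 - \<mu> - \<nu> + \<nu> + 1) * a powr (- 1 - \<mu> - \<nu> + \<mu> + 1)"
        by (simp only: powr_add)
      also have "\<dots> = t powr (- \<mu>) * a powr (- \<nu>)" by (simp add: algebra_simps)
      finally show ?thesis .
    qed
    have "\<bar>g' v\<bar> * f (g v) = (t * a / A^2) * ((t * a) powr (- 1 - \<mu> - \<nu>) / A powr (- 1 - \<mu> - \<nu>) *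
        (t powr \<nu> * v powr \<nu> / A powr \<nu> * (a powr \<mu> * (1 + v) powr \<mu> / A powr \<mu>) * (A / ((c - t) * (v + e)))))"
      unfolding f_def e5 p1 p2 p3 e4 by simp
    also have "\<dots> = ((t * a) powr (- 1 - \<mu> - \<nu>) * t powr \<nu> * a powr \<mu> * (t * a)) * (v powr \<nu> * (1 + v) powr \<mu>) /
        ((A powr (- 1 - \<mu> - \<nu>) * A powr \<nu> * A powr \<mu>) * A * ((c - t) * (v + e)))"
      using A ct e v by (simp add: field_simps power2_eq_square)
    also have "\<dots> = t powr (- \<mu>) * a powr (- \<nu>) / (c - t) * (v powr \<nu> * (1 + v) powr \<mu> / (v + e))"
      unfolding pA pT using A by simp
    finally show ?thesis .
  qed
  have I: "((\<lambda>v. \<bar>g' v\<bar> * f (g v)) has_integral (t powr (- \<mu>) * a powr (- \<nu>) / (c - t) * Q)) {0<..}"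
    using has_integral_mult_right[OF Q[folded a_def, folded e_def], of "t powr (- \<mu>) * a powr (- \<nu>) / (c - t)"] eq
    by (subst has_integral_cong) auto
  have nn: "0 \<le> \<bar>g' v\<bar> * f (g v)" if "v \<in> {0<..}" for v
    using that eq[OF that] ct e by (auto intro!: mult_nonneg_nonneg divide_nonneg_pos)
  have "(f has_integral (t powr (- \<mu>) * a powr (- \<nu>) / (c - t) * Q)) (g ` {0<..})"
    by (rule cov_nonneg[OF _ der inj I nn]) auto
  thus ?thesis unfolding img f_def a_def .
qed


lemma moebR:
  fixes t c \<mu> \<nu> P :: real
  assumes t: "0 < t" "t < 1" and c: "1 < c"
    and P: "((\<lambda>v. v powr \<mu> * (1 + v) powr \<nu> / (v + (1 - c * (1 - t) / (c - t)))) has_integral P) {0<..}"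
  shows "((\<lambda>y. (y - t) powr (- 1 - \<mu> - \<nu>) * (y powr \<nu> * (1 - y) powr \<mu> * (1 / (c - y))))
      has_integral (t powr (- \<mu>) * (1 - t) powr (- \<nu>) / (c - t) * P)) {t<..<1}"
proof -
  define a where "a = 1 - t"
  have a: "0 < a" using t by (simp add: a_def)
  define e where "e = 1 - c * a / (c - t)"
  have ct: "c - t > 0" using t c by simp
  have e_alt: "e = t * (c - 1) / (c - t)" using ct by (simp add: e_def a_def field_simps)
  have e: "e > 0" unfolding e_alt using t c ct by simp
  define g where "g = (\<lambda>v::real. t * (1 + v) / (v + t))"
  define g' where "g' = (\<lambda>v::real. - (t * a) / (v + t)^2)"
  define f where "f = (\<lambda>y::real. (y - t) powr (- 1 - \<mu> - \<nu>) * (y powr \<nu> * (1 - y) powr \<mu> * (1 / (c - y))))"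
  have der: "(g has_field_derivative g' x) (at x within {0<..})" if "x \<in> {0<..}" for x
    using that t unfolding g_def g'_def a_def
    by (auto intro!: derivative_eq_intros simp: field_simps power2_eq_square)
  have inj: "inj_on g {0<..}"
  proof (rule inj_onI)
    fix x y :: real assume x: "x \<in> {0<..}" and y: "y \<in> {0<..}" and h: "g x = g y"
    from x y t have "x + t \<noteq> 0" "y + t \<noteq> 0" by auto
    with h have h2: "t * (1 + x) * (y + t) = t * (1 + y) * (x + t)" by (simp add: g_def divide_simps)
    have "(y - x) * (t * (1 - t)) = t * (1 + x) * (y + t) - t * (1 + y) * (x + t)" by (simp add: algebra_simps)
    also have "\<dots> = 0" using h2 by simp
    finally show "x = y" using t by simp
  qed
  have img: "g ` {0<..} = {t<..<1}"
  proof
    show "g ` {0<..} \<subseteq> {t<..<1}" using a t by (auto simp: g_def field_simps a_def)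
    show "{t<..<1} \<subseteq> g ` {0<..}"
    proof
      fix y :: real assume "y \<in> {t<..<1}"
      hence y: "t < y" "y < 1" by auto
      have "g (t * (1 - y) / (y - t)) = y" using y t by (simp add: g_def divide_simps) (simp add: algebra_simps)
      moreover have "t * (1 - y) / (y - t) \<in> {0<..}" using y t by auto
      ultimately show "y \<in> g ` {0<..}" by (metis image_eqI)
    qed
  qed
  have eq: "\<bar>g' v\<bar> * f (g v) = t powr (- \<mu>) * a powr (- \<nu>) / (c - t) *
      (v powr \<mu> * (1 + v) powr \<nu> / (v + e))" if "v \<in> {0<..}" for v
  proof -
    from that have v: "v > 0" by simp
    define A where "A = v + t"
    have A: "A > 0" using v t by (simp add: A_def)
    have e1: "g v - t = t * a / A" using A by (simp add: g_def A_def a_def field_simps)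
    have e2: "g v = t * (1 + v) / A" by (simp add: g_def A_def)
    have e3: "1 - g v = a * v / A" using A by (simp add: g_def A_def a_def field_simps)
    have "(c - t) * (v + e) = (c - t) * v + t * (c - 1)" using ct by (simp add: e_alt distrib_left)
    also have "\<dots> = c * A - t * (1 + v)" by (simp add: A_def algebra_simps)
    finally have e4': "(c - t) * (v + e) = c * A - t * (1 + v)" .
    have e4: "c - g v = (c - t) * (v + e) / A" unfolding e4' using A by (simp add: g_def A_def field_simps)
    have e5: "\<bar>g' v\<bar> = t * a / A^2" using A t a by (simp add: g'_def A_def)
    have p1: "(g v - t) powr (- 1 - \<mu> - \<nu>) = (t * a) powr (- 1 - \<mu> - \<nu>) / A powr (- 1 - \<mu> - \<nu>)"
      unfolding e1 using t a A by (simp add: powr_divide)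
    have p2: "g v powr \<nu> = t powr \<nu> * (1 + v) powr \<nu> / A powr \<nu>"
      unfolding e2 using t v A by (simp add: powr_divide powr_mult)
    have p3: "(1 - g v) powr \<mu> = a powr \<mu> * v powr \<mu> / A powr \<mu>"
      unfolding e3 using a v A by (simp add: powr_divide powr_mult)
    have pA: "A powr (- 1 - \<mu> - \<nu>) * A powr \<nu> * A powr \<mu> = 1 / A"
    proof -
      have "A powr (- 1 - \<mu> - \<nu>) * A powr \<nu> * A powr \<mu> = A powr (- 1 - \<mu> - \<nu> + \<nu> + \<mu>)"
        by (simp only: powr_add)
      also have "\<dots> = A powr (-1)" by (rule arg_cong[where f="\<lambda>z. A powr z"]) simp
      also have "\<dots> = 1 / A" using A by (simp add: powr_minus_divide abs_of_pos)
      finally show ?thesis .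
    qed
    have pT: "(t * a) powr (- 1 - \<mu> - \<nu>) * t powr \<nu> * a powr \<mu> * (t * a) = t powr (- \<mu>) * a powr (- \<nu>)"
    proof -
      have "(t * a) powr (- 1 - \<mu> - \<nu>) * t powr \<nu> * a powr \<mu> * (t * a)
          = (t powr (- 1 - \<mu> - \<nu>) * t powr \<nu> * t powr 1) * (a powr (- 1 - \<mu> - \<nu>) * a powr \<mu> * a powr 1)"
        using t a by (simp add: powr_mult mult_ac abs_of_pos)
      also have "\<dots> = t powr (- 1 - \<mu> - \<nu> + \<nu> + 1) * a powr (- 1 - \<mu> - \<nu> + \<mu> + 1)"
        by (simp only: powr_add)
      also have "\<dots> = t powr (- \<mu>) * a powr (- \<nu>)" by (simp add: algebra_simps)
      finally show ?thesis .
    qed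
    have "\<bar>g' v\<bar> * f (g v) = (t * a / A^2) * ((t * a) powr (- 1 - \<mu> - \<nu>) / A powr (- 1 - \<mu> - \<nu>) *
        (t powr \<nu> * (1 + v) powr \<nu> / A powr \<nu> * (a powr \<mu> * v powr \<mu> / A powr \<mu>) * (A / ((c - t) * (v + e)))))"
      unfolding f_def e5 p1 p2 p3 e4 by simp
    also have "\<dots> = ((t * a) powr (- 1 - \<mu> - \<nu>) * t powr \<nu> * a powr \<mu> * (t * a)) * (v powr \<mu> * (1 + v) powr \<nu>) /
        ((A powr (- 1 - \<mu> - \<nu>) * A powr \<nu> * A powr \<mu>) * A * ((c - t) * (v + e)))"
      using A ct e v by (simp add: field_simps power2_eq_square)
    also have "\<dots> = t powr (- \<mu>) * a powr (- \<nu>) / (c - t) * (v powr \<mu> * (1 + v) powr \<nu> / (v + e))"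
      unfolding pA pT using A by simp
    finally show ?thesis .
  qed
  have I: "((\<lambda>v. \<bar>g' v\<bar> * f (g v)) has_integral (t powr (- \<mu>) * a powr (- \<nu>) / (c - t) * P)) {0<..}"
    using has_integral_mult_right[OF P[folded a_def, folded e_def], of "t powr (- \<mu>) * a powr (- \<nu>) / (c - t)"] eq
    by (subst has_integral_cong) auto
  have nn: "0 \<le> \<bar>g' v\<bar> * f (g v)" if "v \<in> {0<..}" for v
    using that eq[OF that] ct e by (auto intro!: mult_nonneg_nonneg divide_nonneg_pos)
  have "(f has_integral (t powr (- \<mu>) * a powr (- \<nu>) / (c - t) * P)) (g ` {0<..})"
    by (rule cov_nonneg[OF _ der inj I nn]) auto
  thus ?thesis unfolding img f_def a_def .
qed


lemma powser_unique:
  fixes a b :: "nat \<Rightarrow> real"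
  assumes d: "\<delta> > 0"
    and A: "\<And>x. 0 < x \<Longrightarrow> x < \<delta> \<Longrightarrow> (\<lambda>n. a n * x ^ n) sums f x"
    and B: "\<And>x. 0 < x \<Longrightarrow> x < \<delta> \<Longrightarrow> (\<lambda>n. b n * x ^ n) sums f x"
  shows "a = b"
proof (rule ccontr)
  assume "a \<noteq> b"
  define d where "d = (\<lambda>n. a n - b n)"
  have ex: "\<exists>n. d n \<noteq> 0" using \<open>a \<noteq> b\<close> by (auto simp: d_def fun_eq_iff)
  define N where "N = (LEAST n. d n \<noteq> 0)"
  have dN: "d N \<noteq> 0" unfolding N_def by (rule LeastI_ex[OF ex])
  have dlt: "d n = 0" if "n < N" for n using not_less_Least[of n "\<lambda>n. d n \<noteq> 0"] that unfolding N_def by auto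
  have S0: "(\<lambda>n. d n * x ^ n) sums 0" if "0 < x" "x < \<delta>" for x
  proof -
    have "(\<lambda>n. a n * x ^ n - b n * x ^ n) sums (f x - f x)" by (intro sums_diff A B that)
    thus ?thesis by (simp add: d_def algebra_simps)
  qed
  have S1: "(\<lambda>n. d (n + N) * x ^ n) sums 0" if x: "0 < x" "x < \<delta>" for x
  proof -
    have "(\<lambda>n. d (n + N) * x ^ (n + N)) sums (0 - (\<Sum>i<N. d i * x ^ i))"
      using sums_split_initial_segment[OF S0[OF x], of N] by simp
    also have "(\<Sum>i<N. d i * x ^ i) = 0" by (intro sum.neutral) (auto simp: dlt)
    finally have "(\<lambda>n. d (n + N) * x ^ (n + N)) sums 0" by simp
    hence "(\<lambda>n. d (n + N) * x ^ (n + N) * (1 / x ^ N)) sums (0 * (1 / x ^ N))" by (rule sums_mult2)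
    moreover have "d (n + N) * x ^ (n + N) * (1 / x ^ N) = d (n + N) * x ^ n" for n
      using x by (simp add: power_add)
    ultimately show ?thesis by simp
  qed
  define h where "h = (\<lambda>x. \<Sum>n. d (n + N) * x ^ n)"
  have sK: "summable (\<lambda>n. d (n + N) * (\<delta>/2) ^ n)" using S1[of "\<delta>/2"] d by (auto simp: sums_iff)
  have cont: "isCont h 0" unfolding h_def by (rule isCont_powser[OF sK]) (use d in simp)
  have h0: "h 0 = d N"
  proof -
    have "(\<lambda>n. d (n + N) * 0 ^ n) sums d N"
      using sums_single[of 0 "\<lambda>_. d N"] by (simp add: power_0_left if_distrib cong: if_cong)
    thus ?thesis by (simp add: h_def sums_iff)
  qed
  have "(h \<longlongrightarrow> h 0) (at_right 0)" using cont by (simp add: isCont_def filterlim_at_split)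
  moreover have "eventually (\<lambda>x. h x = 0) (at_right 0)"
  proof -
    have "eventually (\<lambda>x. x \<in> {0<..<\<delta>}) (at_right (0::real))"
      using d by (intro eventually_at_right_real) auto
    thus ?thesis
    proof eventually_elim
      case (elim x)
      hence "(\<lambda>n. d (n + N) * x ^ n) sums 0" by (intro S1) auto
      thus "h x = 0" unfolding h_def by (rule sums_unique[symmetric])
    qed
  qed
  hence "(h \<longlongrightarrow> 0) (at_right 0)" by (rule tendsto_eventually)
  ultimately have "h 0 = 0" by (rule tendsto_unique[rotated]) simp
  with h0 dN show False by simp
qed


lemma not_nonpos_Int_shift:
  fixes \<mu> :: real assumes "-1 < \<mu>" "\<mu> < 0"
  shows "\<mu> - real m + 1 \<notin> \<int>\<^sub>\<le>\<^sub>0"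
proof
  assume "\<mu> - real m + 1 \<in> \<int>\<^sub>\<le>\<^sub>0"
  then obtain n :: int where n: "\<mu> - real m + 1 = of_int n" by (auto elim!: nonpos_Ints_cases)
  hence "\<mu> = of_int (n + int m - 1)" by simp
  hence "\<mu> \<in> \<int>" by (metis Ints_of_int)
  then obtain z :: int where "\<mu> = of_int z" by (auto elim: Ints_cases)
  with assms have "-1 < z" "z < 0" by auto
  thus False by simp
qed

lemma term_id:
  fixes \<alpha> \<mu> \<nu> :: real and m j :: nat
  assumes a: "1 < \<alpha>" "\<alpha> < 2" and mu: "-1 < \<mu>" "\<mu> < 0" and s: "\<mu> + \<nu> = \<alpha> - 2"
  shows "Gamma (\<alpha> - 1) * ((\<mu> gchoose m) * (-1) ^ m * (((1 - \<alpha>) gchoose j) * (-1) ^ j)) =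
    (-1) ^ (m + j) * ((-1) ^ j * Gamma (real j + \<alpha> - 1) * Gamma (\<mu> + 1)
        / (Gamma (\<alpha> - 1 - \<nu> - real (m + j) + real j) * Gamma (real j + 1) * Gamma (real (m + j) + 1 - real j)))"
proof -
  have F1: "((1 - \<alpha>) gchoose j) = (-1) ^ j * pochhammer (\<alpha> - 1) j / fact j"
    by (simp add: gbinomial_pochhammer)
  have nz1: "\<alpha> - 1 \<notin> \<int>\<^sub>\<le>\<^sub>0" using a by (auto elim!: nonpos_Ints_cases)
  have G1: "Gamma (\<alpha> - 1) \<noteq> 0" using nz1 by (simp add: Gamma_eq_zero_iff)
  have F2: "pochhammer (\<alpha> - 1) j = Gamma (real j + \<alpha> - 1) / Gamma (\<alpha> - 1)"
  proof -
    have e: "real j + \<alpha> - 1 = \<alpha> - 1 + real j" by simp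
    show ?thesis by (simp only: e pochhammer_Gamma[OF nz1])
  qed
  have F3: "\<mu> gchoose m = pochhammer (\<mu> - real m + 1) m / fact m"
    by (simp add: gbinomial_pochhammer')
  have nz2: "\<mu> - real m + 1 \<notin> \<int>\<^sub>\<le>\<^sub>0" by (rule not_nonpos_Int_shift[OF mu])
  have G2: "Gamma (\<mu> - real m + 1) \<noteq> 0" using nz2 by (simp add: Gamma_eq_zero_iff)
  have F4: "pochhammer (\<mu> - real m + 1) m = Gamma (\<mu> + 1) / Gamma (\<mu> - real m + 1)"
    using pochhammer_Gamma[OF nz2, of m] by simp
  have F5: "Gamma (real j + 1) = fact j" using Gamma_fact[of j] by (simp add: add_ac)
  have F6: "Gamma (real (m + j) + 1 - real j) = fact m" using Gamma_fact[of m] by (simp add: add_ac)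
  have F7: "\<alpha> - 1 - \<nu> - real (m + j) + real j = \<mu> - real m + 1" using s by simp
  have sg: "(-1::real) ^ m * ((-1) ^ j * (-1) ^ j) = (-1) ^ (m + j) * (-1) ^ j"
    by (simp add: power_add)
  show ?thesis
    unfolding F1 F2 F3 F4 F5 F6 F7 using G1 G2
    by (simp add: field_simps power_add)
qed


definition bco :: "real \<Rightarrow> real \<Rightarrow> real \<Rightarrow> real \<Rightarrow> nat \<Rightarrow> real" where
  "bco \<alpha> \<mu> \<nu> t k = (\<Sum>j = 0..k. ((-1) ^ k * ((-1) ^ j * Gamma (real j + \<alpha> - 1) * Gamma (\<mu> + 1)
        / (Gamma (\<alpha> - 1 - \<nu> - real k + real j) * Gamma (real j + 1) * Gamma (real k + 1 - real j))))
      * t ^ j)"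

lemma binom_abs_summable:
  fixes a x :: real assumes "\<bar>x\<bar> < 1"
  shows "summable (\<lambda>n. norm ((a gchoose n) * x ^ n))"
proof -
  define r where "r = (1 + \<bar>x\<bar>) / 2"
  have r: "\<bar>r\<bar> < 1" "\<bar>x\<bar> < \<bar>r\<bar>" using assms by (auto simp: r_def)
  have "summable (\<lambda>n. (a gchoose n) * r ^ n)" using gen_binomial_real[OF r(1)] by (simp add: sums_iff)
  thus ?thesis by (rule powser_insidea) (use r in simp)
qed

lemma rhs_series:
  fixes \<alpha> \<mu> \<nu> t x :: real
  assumes a: "1 < \<alpha>" "\<alpha> < 2" and mu: "-1 < \<mu>" "\<mu> < 0" and s: "\<mu> + \<nu> = \<alpha> - 2"
    and t: "0 < t" "t < 1" and x: "0 < x" "x < 1"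
  shows "(\<lambda>k. bco \<alpha> \<mu> \<nu> t k * x ^ k) sums (Gamma (\<alpha> - 1) * ((1 - x) powr \<mu> * (1 - t * x) powr (1 - \<alpha>)))"
proof -
  define A where "A = (\<lambda>i. (\<mu> gchoose i) * (- x) ^ i)"
  define B where "B = (\<lambda>i. ((1 - \<alpha>) gchoose i) * (- (t * x)) ^ i)"
  have x1: "\<bar>- x\<bar> < 1" using x by simp
  have "t * x < 1 * 1" using t x by (intro mult_strict_mono) auto
  hence x2: "\<bar>- (t * x)\<bar> < 1" using x t by (simp add: abs_mult)
  have sA: "A sums (1 - x) powr \<mu>" using gen_binomial_real[OF x1, of \<mu>] by (simp add: A_def)
  have sB: "B sums (1 - t * x) powr (1 - \<alpha>)" using gen_binomial_real[OF x2, of "1 - \<alpha>"] by (simp add: B_def)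
  have nA: "summable (\<lambda>k. norm (A k))" unfolding A_def by (rule binom_abs_summable[OF x1])
  have nB: "summable (\<lambda>k. norm (B k))" unfolding B_def by (rule binom_abs_summable[OF x2])
  have CP: "(\<lambda>k. \<Sum>i\<le>k. A i * B (k - i)) sums ((1 - x) powr \<mu> * (1 - t * x) powr (1 - \<alpha>))"
    using Cauchy_product_sums[OF nA nB] sA sB by (simp add: sums_iff)
  have eqk: "Gamma (\<alpha> - 1) * (\<Sum>i\<le>k. A i * B (k - i)) = bco \<alpha> \<mu> \<nu> t k * x ^ k" for k
  proof -
    have "bco \<alpha> \<mu> \<nu> t k * x ^ k = (\<Sum>j = 0..k. Gamma (\<alpha> - 1) * ((\<mu> gchoose (k - j)) * (-1) ^ (k - j) *
        (((1 - \<alpha>) gchoose j) * (-1) ^ j)) * t ^ j * x ^ k)"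
      unfolding bco_def sum_distrib_right
    proof (rule sum.cong[OF refl])
      fix j assume "j \<in> {0..k}"
      hence jk: "k - j + j = k" by simp
      show "(-1) ^ k * ((-1) ^ j * Gamma (real j + \<alpha> - 1) * Gamma (\<mu> + 1) /
           (Gamma (\<alpha> - 1 - \<nu> - real k + real j) * Gamma (real j + 1) * Gamma (real k + 1 - real j))) * t ^ j * x ^ k =
          Gamma (\<alpha> - 1) * ((\<mu> gchoose (k - j)) * (-1) ^ (k - j) * (((1 - \<alpha>) gchoose j) * (-1) ^ j)) * t ^ j * x ^ k"
        using term_id[OF a mu s, of "k - j" j] unfolding jk by simp
    qed
    also have "\<dots> = (\<Sum>i = 0..k. Gamma (\<alpha> - 1) * ((\<mu> gchoose (k - (k - i))) * (-1) ^ (k - (k - i)) *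
        (((1 - \<alpha>) gchoose (k - i)) * (-1) ^ (k - i))) * t ^ (k - i) * x ^ k)"
      by (subst sum.atLeastAtMost_rev) simp
    also have "\<dots> = (\<Sum>i = 0..k. Gamma (\<alpha> - 1) * (A i * B (k - i)))"
    proof (rule sum.cong[OF refl])
      fix i assume "i \<in> {0..k}"
      hence ik: "k - (k - i) = i" "i + (k - i) = k" by auto
      have "x ^ k = x ^ i * x ^ (k - i)" by (subst ik(2)[symmetric], subst power_add) simp
      thus "Gamma (\<alpha> - 1) * ((\<mu> gchoose (k - (k - i))) * (-1) ^ (k - (k - i)) *
          (((1 - \<alpha>) gchoose (k - i)) * (-1) ^ (k - i))) * t ^ (k - i) * x ^ k =
          Gamma (\<alpha> - 1) * (A i * B (k - i))"
        unfolding ik(1) A_def B_def by (simp add: power_mult_distrib mult_ac power_minus')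
    qed
    finally show ?thesis by (simp add: sum_distrib_left atLeast0AtMost)
  qed
  show ?thesis using sums_mult[OF CP, of "Gamma (\<alpha> - 1)"] eqk by simp
qed


lemma powr_cancel_neg: "(x::real) > 0 \<Longrightarrow> x powr (- a) * x powr a = 1"
  by (simp add: powr_add[symmetric])

lemma gen_id:
  fixes t c \<mu> \<nu> :: real
  assumes t: "0 < t" "t < 1" and c: "1 < c" and mu: "-1 < \<mu>" "\<mu> < 0" and nu: "-1 < \<nu>" "\<nu> < 0"
  obtains L R where
    "((\<lambda>y. (t - y) powr (- 1 - \<mu> - \<nu>) * (y powr \<nu> * (1 - y) powr \<mu> * (1 / (c - y)))) has_integral L) {0<..<t}"
    "((\<lambda>y. (y - t) powr (- 1 - \<mu> - \<nu>) * (y powr \<nu> * (1 - y) powr \<mu> * (1 / (c - y)))) has_integral R) {t<..<1}"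
    "L / Kc \<nu> + R / Kc \<mu> = c powr \<nu> * (c - 1) powr \<mu> * (c - t) powr (- 1 - \<mu> - \<nu>)"
proof -
  define e where "e = c * (1 - t) / (c - t)"
  have ct: "c - t > 0" using t c by simp
  have e0: "0 < e" using t c ct by (simp add: e_def)
  have e1: "e < 1" using t c ct by (simp add: e_def field_simps)
  have 1: "1 - e = t * (c - 1) / (c - t)" using ct by (simp add: e_def field_simps)
  obtain Q P where Q: "((\<lambda>v. v powr \<nu> * (1 + v) powr \<mu> / (v + e)) has_integral Q) {0<..}"
      and P: "((\<lambda>v. v powr \<mu> * (1 + v) powr \<nu> / (v + (1 - e))) has_integral P) {0<..}"
      and QP: "Q / Kc \<nu> + P / Kc \<mu> = e powr \<nu> * (1 - e) powr \<mu>"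
    using core[OF mu nu e0 e1] by blast
  define T where "T = t powr (- \<mu>) * (1 - t) powr (- \<nu>) / (c - t)"
  have L: "((\<lambda>y. (t - y) powr (- 1 - \<mu> - \<nu>) * (y powr \<nu> * (1 - y) powr \<mu> * (1 / (c - y)))) has_integral (T * Q)) {0<..<t}"
    unfolding T_def by (rule moebL[OF t c]) (use Q in \<open>simp add: e_def\<close>)
  have R: "((\<lambda>y. (y - t) powr (- 1 - \<mu> - \<nu>) * (y powr \<nu> * (1 - y) powr \<mu> * (1 / (c - y)))) has_integral (T * P)) {t<..<1}"
    unfolding T_def by (rule moebR[OF t c]) (use P in \<open>simp add: e_def\<close>)
  have "T * Q / Kc \<nu> + T * P / Kc \<mu> = T * (Q / Kc \<nu> + P / Kc \<mu>)" by (simp add: algebra_simps)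
  also have "\<dots> = T * (e powr \<nu> * (1 - e) powr \<mu>)" by (simp only: QP)
  also have "\<dots> = c powr \<nu> * (c - 1) powr \<mu> * (c - t) powr (- 1 - \<mu> - \<nu>)"
  proof -
    have pe: "e powr \<nu> = c powr \<nu> * (1 - t) powr \<nu> / (c - t) powr \<nu>"
      unfolding e_def using c t ct by (simp add: powr_divide powr_mult)
    have pe1: "(1 - e) powr \<mu> = t powr \<mu> * (c - 1) powr \<mu> / (c - t) powr \<mu>"
      unfolding 1 using c t ct by (simp add: powr_divide powr_mult)
    have pc: "(c - t) powr (- 1 - \<mu> - \<nu>) = 1 / ((c - t) * (c - t) powr \<nu> * (c - t) powr \<mu>)"
    proof -
      have "(c - t) powr (- 1 - \<mu> - \<nu>) * ((c - t) powr 1 * (c - t) powr \<nu> * (c - t) powr \<mu>) = (c - t) powr (- 1 - \<mu> - \<nu> + 1 + \<nu> + \<mu>)"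
        by (simp only: powr_add mult.assoc)
      also have "\<dots> = 1" using ct by simp
      finally show ?thesis using ct by (simp add: field_simps)
    qed
    have c1: "t powr (- \<mu>) * t powr \<mu> = 1" using t by (intro powr_cancel_neg) simp
    have c2: "(1 - t) powr (- \<nu>) * (1 - t) powr \<nu> = 1" using t by (intro powr_cancel_neg) simp
    have "T * (e powr \<nu> * (1 - e) powr \<mu>) = (t powr (- \<mu>) * t powr \<mu>) * ((1 - t) powr (- \<nu>) * (1 - t) powr \<nu>) *
        (c powr \<nu> * (c - 1) powr \<mu>) / ((c - t) * (c - t) powr \<nu> * (c - t) powr \<mu>)"
      unfolding T_def pe pe1 using ct by (simp add: field_simps)
    also have "\<dots> = c powr \<nu> * (c - 1) powr \<mu> * (c - t) powr (- 1 - \<mu> - \<nu>)"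
      unfolding c1 c2 pc by simp
    finally show ?thesis .
  qed
  finally show ?thesis using that[OF L R] by blast
qed


lemma dom_int:
  fixes f g :: "real \<Rightarrow> real"
  assumes fm: "f \<in> borel_measurable borel" and S: "S \<in> sets borel"
    and nn: "\<And>x. x \<in> S \<Longrightarrow> 0 \<le> f x" and le: "\<And>x. x \<in> S \<Longrightarrow> f x \<le> g x"
    and G: "(g has_integral Gv) S"
  shows "f integrable_on S"
proof -
  have gn: "(\<integral>\<^sup>+x. ennreal (g x) * indicator S x \<partial>lborel) = ennreal Gv"
    by (rule nn_integral_has_integral_lebesgue'[OF _ G]) (use nn le in force)
  have "(\<integral>\<^sup>+x. ennreal (f x) * indicator S x \<partial>lborel) \<le> (\<integral>\<^sup>+x. ennreal (g x) * indicator S x \<partial>lborel)"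
    by (intro nn_integral_mono) (auto simp: indicator_def le ennreal_leI)
  hence "(\<integral>\<^sup>+x. ennreal (f x) * indicator S x \<partial>lborel) < top" using gn by (simp add: le_less_trans)
  then obtain F where F: "(\<integral>\<^sup>+x. ennreal (f x) * indicator S x \<partial>lborel) = ennreal F" "F \<ge> 0"
    by (cases "(\<integral>\<^sup>+x. ennreal (f x) * indicator S x \<partial>lborel)" rule: ennreal_cases) auto
  have "(f has_integral F) S" by (rule nn_to_hi[OF fm nn S F])
  thus ?thesis by blast
qed

lemma int_k:
  fixes w :: "real \<Rightarrow> real" and S :: "real set"
  assumes S: "S \<in> sets borel" "S \<subseteq> {0<..<1}" and wm: "w \<in> borel_measurable borel"
    and wn: "\<And>y. y \<in> S \<Longrightarrow> 0 \<le> w y" and c: "1 < c"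
    and I: "((\<lambda>y. w y * (1 / (c - y))) has_integral I) S"
  shows "(\<lambda>y. w y * y ^ k) integrable_on S"
proof (rule dom_int)
  show "(\<lambda>y. w y * y ^ k) \<in> borel_measurable borel" using wm by measurable
  show "((\<lambda>y. c * (w y * (1 / (c - y)))) has_integral (c * I)) S" using has_integral_mult_right[OF I, of c]
    by (simp add: mult.commute)
  fix y assume y: "y \<in> S"
  hence y01: "0 < y" "y < 1" using S by auto
  show "0 \<le> w y * y ^ k" using wn[OF y] y01 by simp
  have "y ^ k \<le> 1" using y01 by (simp add: power_le_one)
  also have "1 \<le> c * (1 / (c - y))" using y01 c by (simp add: field_simps)
  finally have "y ^ k \<le> c * (1 / (c - y))" .
  hence "w y * y ^ k \<le> w y * (c * (1 / (c - y)))" using wn[OF y] by (rule mult_left_mono)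
  thus "w y * y ^ k \<le> c * (w y * (1 / (c - y)))" by (simp only: mult_ac)
qed (rule S(1))

lemma sums_k:
  fixes w :: "real \<Rightarrow> real" and S :: "real set"
  assumes S: "S \<in> sets borel" "S \<subseteq> {0<..<1}" and wm: "w \<in> borel_measurable borel"
    and wn: "\<And>y. y \<in> S \<Longrightarrow> 0 \<le> w y" and c: "1 < c"
    and I: "((\<lambda>y. w y * (1 / (c - y))) has_integral I) S"
  shows "(\<lambda>k. (1 / c) ^ k * integral S (\<lambda>y. w y * y ^ k)) sums (c * I)"
proof -
  define x where "x = 1 / c"
  have x: "0 < x" "x < 1" using c by (auto simp: x_def)
  define f where "f = (\<lambda>n y. \<Sum>k<n. x ^ k * (w y * y ^ k))"
  define h where "h = (\<lambda>y. c * (w y * (1 / (c - y))))"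
  have ik: "(\<lambda>y. w y * y ^ k) integrable_on S" for k by (rule int_k[OF S wm wn c I])
  have ikc: "(\<lambda>y. x ^ k * (w y * y ^ k)) integrable_on S" for k using ik[of k] x by simp
  have fi: "f n integrable_on S" for n
    unfolding f_def by (intro integrable_sum finite_lessThan ikc)
  have hI: "(h has_integral (c * I)) S" unfolding h_def by (rule has_integral_mult_right[OF I])
  have hi: "h integrable_on S" using hI by blast
  have hform: "h y = w y * (1 / (1 - x * y))" if "y \<in> S" for y
  proof -
    from that S have y: "0 < y" "y < 1" by auto
    have "c - y \<noteq> 0" using y c by simp
    thus ?thesis using c by (simp add: h_def x_def field_simps)
  qed
  have fform: "f n y = w y * (\<Sum>k<n. (x * y) ^ k)" for n y
    by (simp add: f_def sum_distrib_left power_mult_distrib mult_ac)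
  have le: "norm (f n y) \<le> h y" if "y \<in> S" for n y
  proof -
    from that S have y: "0 < y" "y < 1" by auto
    have "x * y < 1 * 1" using x y by (intro mult_strict_mono) auto
    hence xy: "0 \<le> x * y" "x * y < 1" using x y by auto
    have s0: "0 \<le> (\<Sum>k<n. (x * y) ^ k)" using xy by (intro sum_nonneg) auto
    have "(\<Sum>k<n. (x * y) ^ k) = (1 - (x * y) ^ n) / (1 - x * y)"
      using xy by (simp add: sum_gp_strict)
    also have "\<dots> \<le> 1 / (1 - x * y)" using xy by (intro divide_right_mono) auto
    finally have "(\<Sum>k<n. (x * y) ^ k) \<le> 1 / (1 - x * y)" .
    hence "w y * (\<Sum>k<n. (x * y) ^ k) \<le> w y * (1 / (1 - x * y))" using wn[OF that] by (rule mult_left_mono)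
    thus ?thesis using s0 wn[OF that] hform[OF that] by (simp add: fform)
  qed
  have conv: "(\<lambda>n. f n y) \<longlonglongrightarrow> h y" if "y \<in> S" for y
  proof -
    from that S have y: "0 < y" "y < 1" by auto
    have "x * y < 1 * 1" using x y by (intro mult_strict_mono) auto
    hence xy: "norm (x * y) < 1" using x y by (auto simp: abs_mult)
    have "(\<lambda>n. \<Sum>k<n. (x * y) ^ k) \<longlonglongrightarrow> 1 / (1 - x * y)"
      using geometric_sums[OF xy] by (simp add: sums_def)
    hence "(\<lambda>n. w y * (\<Sum>k<n. (x * y) ^ k)) \<longlonglongrightarrow> w y * (1 / (1 - x * y))" by (intro tendsto_mult tendsto_const)
    thus ?thesis by (simp add: fform hform[OF that])
  qed
  have "(\<lambda>n. integral S (f n)) \<longlonglongrightarrow> integral S h"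
    by (rule dominated_convergence(2)[OF fi hi le conv])
  moreover have "integral S (f n) = (\<Sum>k<n. x ^ k * integral S (\<lambda>y. w y * y ^ k))" for n
    unfolding f_def by (subst integral_sum) (auto intro: ikc)
  moreover have "integral S h = c * I" using hI by (rule integral_unique)
  ultimately show ?thesis by (simp add: sums_def x_def)
qed


lemma hi_to_set:
  fixes f :: "real \<Rightarrow> real"
  assumes fm: "f \<in> borel_measurable borel" and S: "S \<in> sets borel"
    and nn: "\<And>x. x \<in> S \<Longrightarrow> 0 \<le> f x" and fi: "f integrable_on S"
  shows "(LINT x:S|lborel. f x) = integral S f"
proof -
  have hi: "(f has_integral integral S f) S" using fi by (rule integrable_integral)
  have nI: "(\<integral>\<^sup>+x. ennreal (f x) * indicator S x \<partial>lborel) = ennreal (integral S f)"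
    by (rule nn_integral_has_integral_lebesgue'[OF nn hi])
  have "integrable lborel (\<lambda>x. indicator S x *\<^sub>R f x)"
  proof (rule integrableI_nn_integral_finite)
    show "(\<lambda>x. indicator S x *\<^sub>R f x) \<in> borel_measurable lborel" using fm S by measurable
    show "AE x in lborel. 0 \<le> indicator S x *\<^sub>R f x" using nn by (intro AE_I2) (auto simp: indicator_def)
    have "(\<lambda>x. ennreal (indicator S x *\<^sub>R f x)) = (\<lambda>x. ennreal (f x) * indicator S x)"
      by (auto simp: indicator_def fun_eq_iff)
    thus "(\<integral>\<^sup>+x. ennreal (indicator S x *\<^sub>R f x) \<partial>lborel) = ennreal (integral S f)" using nI by simp
  qed
  hence "set_integrable lborel S f" by (simp add: set_integrable_def)
  thus ?thesis by (rule set_borel_integral_eq_integral(2))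
qed

theorem lemma2p1:
  fixes p \<alpha> \<mu> \<nu> t :: real and k :: nat
  assumes "0 < p" "p < 1" "1 < \<alpha>" "\<alpha> < 2"
    and "\<alpha> - 2 < \<mu>" "\<mu> < 0" "\<alpha> - 2 < \<nu>" "\<nu> < 0"
    and "\<mu> + \<nu> = \<alpha> - 2"
    and "p * sin (pi * \<mu>) = (1 - p) * sin (pi * \<nu>)"
    and "0 < t" "t < 1"
  shows "two_sided_int p 0 1 \<alpha> \<mu> \<nu> (2 - \<alpha>) (\<lambda>s. s powr \<nu> * (1 - s) powr \<mu> * s ^ k) t =
    (\<Sum>j = 0..k. ((-1) ^ k * ((-1) ^ j * Gamma (real j + \<alpha> - 1) * Gamma (\<mu> + 1)
        / (Gamma (\<alpha> - 1 - \<nu> - real k + real j) * Gamma (real j + 1) * Gamma (real k + 1 - real j))))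
      * t ^ j)"
proof -
  note a = assms(3,4)
  have mu: "-1 < \<mu>" "\<mu> < 0" using assms by auto
  have nu: "-1 < \<nu>" "\<nu> < 0" using assms by auto
  have s: "\<mu> + \<nu> = \<alpha> - 2" by fact
  have pp: "p * sin (pi * \<mu>) = (1 - p) * sin (pi * \<nu>)" by fact
  have t: "0 < t" "t < 1" using assms by auto
  have ex: "2 - \<alpha> - 1 = - 1 - \<mu> - \<nu>" using s by simp
  define wL where "wL = (\<lambda>y::real. (t - y) powr (- 1 - \<mu> - \<nu>) * (y powr \<nu> * (1 - y) powr \<mu>))"
  define wR where "wR = (\<lambda>y::real. (y - t) powr (- 1 - \<mu> - \<nu>) * (y powr \<nu> * (1 - y) powr \<mu>))"
  define SL where "SL = {0<..<t}"
  define SR where "SR = {t<..<1::real}"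
  have SLb: "SL \<in> sets borel" "SL \<subseteq> {0<..<1}" using t by (auto simp: SL_def)
  have SRb: "SR \<in> sets borel" "SR \<subseteq> {0<..<1}" using t by (auto simp: SR_def)
  have wLm: "wL \<in> borel_measurable borel" unfolding wL_def by measurable
  have wRm: "wR \<in> borel_measurable borel" unfolding wR_def by measurable
  have wLn: "0 \<le> wL y" for y by (simp add: wL_def)
  have wRn: "0 \<le> wR y" for y by (simp add: wR_def)
  have gL: "((\<lambda>y. wL y * (1 / (c - y))) has_integral L) SL"
    if "((\<lambda>y. (t - y) powr (- 1 - \<mu> - \<nu>) * (y powr \<nu> * (1 - y) powr \<mu> * (1 / (c - y)))) has_integral L) {0<..<t}" for c L
    using that by (simp add: wL_def SL_def mult_ac)
  have gR: "((\<lambda>y. wR y * (1 / (c - y))) has_integral R) SR"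
    if "((\<lambda>y. (y - t) powr (- 1 - \<mu> - \<nu>) * (y powr \<nu> * (1 - y) powr \<mu> * (1 / (c - y)))) has_integral R) {t<..<1}" for c R
    using that by (simp add: wR_def SR_def mult_ac)
  obtain L2 R2 where L2: "((\<lambda>y. (t - y) powr (- 1 - \<mu> - \<nu>) * (y powr \<nu> * (1 - y) powr \<mu> * (1 / (2 - y)))) has_integral L2) {0<..<t}"
      and R2: "((\<lambda>y. (y - t) powr (- 1 - \<mu> - \<nu>) * (y powr \<nu> * (1 - y) powr \<mu> * (1 / (2 - y)))) has_integral R2) {t<..<1}"
  proof -
    have two: "(1::real) < 2" by simp
    show ?thesis using gen_id[OF t two mu nu] that by blast
  qed
  have iL: "(\<lambda>y. wL y * y ^ n) integrable_on SL" for n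
    by (rule int_k[OF SLb wLm wLn _ gL[OF L2]]) simp
  have iR: "(\<lambda>y. wR y * y ^ n) integrable_on SR" for n
    by (rule int_k[OF SRb wRm wRn _ gR[OF R2]]) simp
  define Lk where "Lk = (\<lambda>n. integral SL (\<lambda>y. wL y * y ^ n))"
  define Rk where "Rk = (\<lambda>n. integral SR (\<lambda>y. wR y * y ^ n))"
  define C where "C = C_const \<alpha> \<mu> \<nu>"
  define Lam where "Lam = (\<lambda>n. C * (p * (1 / Gamma (2 - \<alpha>) * Lk n) + (1 - p) * (1 / Gamma (2 - \<alpha>) * Rk n)))"
  have LHS: "two_sided_int p 0 1 \<alpha> \<mu> \<nu> (2 - \<alpha>) (\<lambda>s. s powr \<nu> * (1 - s) powr \<mu> * s ^ k) t = Lam k"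
  proof -
    have "(LINT y:{0<..<t}|lborel. (t - y) powr (2 - \<alpha> - 1) * (y powr \<nu> * (1 - y) powr \<mu> * y ^ k)) = Lk k"
    proof -
      have "(LINT y:{0<..<t}|lborel. (t - y) powr (2 - \<alpha> - 1) * (y powr \<nu> * (1 - y) powr \<mu> * y ^ k)) =
            (LINT y:SL|lborel. wL y * y ^ k)"
        unfolding ex wL_def SL_def by (simp add: mult_ac)
      also have "\<dots> = Lk k" unfolding Lk_def
        by (rule hi_to_set[OF _ SLb(1) _ iL]) (use wLm wLn in \<open>auto simp: SL_def intro!: mult_nonneg_nonneg\<close>)
      finally show ?thesis .
    qed
    moreover have "(LINT y:{t<..<1}|lborel. (y - t) powr (2 - \<alpha> - 1) * (y powr \<nu> * (1 - y) powr \<mu> * y ^ k)) = Rk k"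
    proof -
      have "(LINT y:{t<..<1}|lborel. (y - t) powr (2 - \<alpha> - 1) * (y powr \<nu> * (1 - y) powr \<mu> * y ^ k)) =
            (LINT y:SR|lborel. wR y * y ^ k)"
        unfolding ex wR_def SR_def by (simp add: mult_ac)
      also have "\<dots> = Rk k" unfolding Rk_def
        by (rule hi_to_set[OF _ SRb(1) _ iR]) (use wRm wRn t in \<open>auto simp: SR_def intro!: mult_nonneg_nonneg\<close>)
      finally show ?thesis .
    qed
    ultimately show ?thesis
      unfolding two_sided_int_def RL_left_def RL_right_def Lam_def C_def by simp
  qed
  have sa: "sin (pi * \<alpha>) < 0"
  proof -
    have "0 < pi * (\<alpha> - 1)" using a by simp
    moreover have "pi * (\<alpha> - 1) < pi * 1" using a by (intro mult_strict_left_mono) auto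
    ultimately have "sin (pi * (\<alpha> - 1)) > 0" by (intro sin_gt_zero) auto
    moreover have "sin (pi * (\<alpha> - 1)) = - sin (pi * \<alpha>)"
      by (simp add: right_diff_distrib sin_diff)
    ultimately show ?thesis by simp
  qed
  have Gref: "Gamma (2 - \<alpha>) * Gamma (\<alpha> - 1) = pi / (- sin (pi * \<alpha>))"
  proof -
    have "Gamma (2 - \<alpha>) * Gamma (1 - (2 - \<alpha>)) = pi / sin (pi * (2 - \<alpha>))" by (rule Gamma_reflection_real)
    moreover have "sin (pi * (2 - \<alpha>)) = - sin (pi * \<alpha>)"
      by (simp add: right_diff_distrib sin_diff)
    moreover have "1 - (2 - \<alpha>) = \<alpha> - 1" by simp
    ultimately show ?thesis by simp
  qed
  have G2: "Gamma (2 - \<alpha>) \<noteq> 0" using Gref sa by auto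
  have Kmu: "Kc \<mu> > 0" and Knu: "Kc \<nu> > 0" using Kc_pos mu nu by auto
  have snu: "sin (pi * \<nu>) = - pi / Kc \<nu>" using Knu by (auto simp: Kc_def field_simps)
  have smu: "sin (pi * \<mu>) = - pi / Kc \<mu>" using Kmu by (auto simp: Kc_def field_simps)
  have Cp: "C * p = sin (pi * \<nu>) / sin (pi * \<alpha>)"
  proof -
    have "C * p = (p * sin (pi * \<mu>) + p * sin (pi * \<nu>)) / sin (pi * \<alpha>)"
      by (simp add: C_def C_const_def algebra_simps)
    also have "p * sin (pi * \<mu>) + p * sin (pi * \<nu>) = sin (pi * \<nu>)" using pp by (simp add: algebra_simps)
    finally show ?thesis .
  qed
  have C1p: "C * (1 - p) = sin (pi * \<mu>) / sin (pi * \<alpha>)"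
  proof -
    have "C * (1 - p) = ((1 - p) * sin (pi * \<mu>) + (1 - p) * sin (pi * \<nu>)) / sin (pi * \<alpha>)"
      by (simp add: C_def C_const_def algebra_simps)
    also have "(1 - p) * sin (pi * \<mu>) + (1 - p) * sin (pi * \<nu>) = sin (pi * \<mu>)" using pp by (simp add: algebra_simps)
    finally show ?thesis .
  qed
  have ser: "(\<lambda>n. Lam n * x ^ n) sums (Gamma (\<alpha> - 1) * ((1 - x) powr \<mu> * (1 - t * x) powr (1 - \<alpha>)))"
    if x: "0 < x" "x < 1" for x
  proof -
    define c where "c = 1 / x"
    have c: "1 < c" using x by (simp add: c_def)
    have xc: "x = 1 / c" using x by (simp add: c_def)
    obtain L R where L: "((\<lambda>y. (t - y) powr (- 1 - \<mu> - \<nu>) * (y powr \<nu> * (1 - y) powr \<mu> * (1 / (c - y)))) has_integral L) {0<..<t}"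
        and R: "((\<lambda>y. (y - t) powr (- 1 - \<mu> - \<nu>) * (y powr \<nu> * (1 - y) powr \<mu> * (1 / (c - y)))) has_integral R) {t<..<1}"
        and LR: "L / Kc \<nu> + R / Kc \<mu> = c powr \<nu> * (c - 1) powr \<mu> * (c - t) powr (- 1 - \<mu> - \<nu>)"
      using gen_id[OF t c mu nu] by blast
    have sL: "(\<lambda>n. (1 / c) ^ n * Lk n) sums (c * L)"
      unfolding Lk_def by (rule sums_k[OF SLb wLm _ c gL[OF L]]) (simp add: wLn)
    have sR: "(\<lambda>n. (1 / c) ^ n * Rk n) sums (c * R)"
      unfolding Rk_def by (rule sums_k[OF SRb wRm _ c gR[OF R]]) (simp add: wRn)
    define A where "A = C * p / Gamma (2 - \<alpha>)"
    define B where "B = C * (1 - p) / Gamma (2 - \<alpha>)"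
    have S: "(\<lambda>n. A * ((1 / c) ^ n * Lk n) + B * ((1 / c) ^ n * Rk n)) sums (A * (c * L) + B * (c * R))"
      by (intro sums_add sums_mult sL sR)
    have eqn: "Lam n * x ^ n = A * ((1 / c) ^ n * Lk n) + B * ((1 / c) ^ n * Rk n)" for n
      unfolding Lam_def A_def B_def xc by (simp add: algebra_simps)
    have val1: "A * (c * L) + B * (c * R) = c * Gamma (\<alpha> - 1) * (L / Kc \<nu> + R / Kc \<mu>)"
    proof -
      have G1: "Gamma (\<alpha> - 1) = pi / (- sin (pi * \<alpha>)) / Gamma (2 - \<alpha>)"
      proof -
        have "Gamma (\<alpha> - 1) = (Gamma (2 - \<alpha>) * Gamma (\<alpha> - 1)) / Gamma (2 - \<alpha>)" using G2 by simp
        also have "\<dots> = pi / (- sin (pi * \<alpha>)) / Gamma (2 - \<alpha>)" by (simp only: Gref)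
        finally show ?thesis .
      qed
      have "A * (c * L) + B * (c * R) = c / Gamma (2 - \<alpha>) * ((C * p) * L + (C * (1 - p)) * R)"
        unfolding A_def B_def using G2 by (simp add: field_simps)
      also have "\<dots> = c / Gamma (2 - \<alpha>) * ((- pi / Kc \<nu>) / sin (pi * \<alpha>) * L + (- pi / Kc \<mu>) / sin (pi * \<alpha>) * R)"
        unfolding Cp C1p snu smu ..
      also have "\<dots> = c * (pi / (- sin (pi * \<alpha>)) / Gamma (2 - \<alpha>)) * (L / Kc \<nu> + R / Kc \<mu>)"
        using sa G2 Kmu Knu by (simp add: field_simps)
      finally show ?thesis unfolding G1 .
    qed
    have val2: "c * (c powr \<nu> * (c - 1) powr \<mu> * (c - t) powr (- 1 - \<mu> - \<nu>)) = (1 - x) powr \<mu> * (1 - t * x) powr (1 - \<alpha>)"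
    proof -
      have e1: "c - 1 = (1 - x) / x" using x by (simp add: c_def field_simps)
      have e2: "c - t = (1 - t * x) / x" using x by (simp add: c_def field_simps)
      have tx: "0 < 1 - t * x"
      proof -
        have "t * x < 1 * 1" using t x by (intro mult_strict_mono) auto
        thus ?thesis by simp
      qed
      have ex2: "- 1 - \<mu> - \<nu> = 1 - \<alpha>" using s by simp
      have p1: "c powr \<nu> = 1 / x powr \<nu>" using x by (simp add: c_def powr_divide)
      have p2: "(c - 1) powr \<mu> = (1 - x) powr \<mu> / x powr \<mu>" unfolding e1 using x by (simp add: powr_divide)
      have p3: "(c - t) powr (1 - \<alpha>) = (1 - t * x) powr (1 - \<alpha>) / x powr (1 - \<alpha>)" unfolding e2 using x tx by (simp add: powr_divide)
      have px: "x * x powr \<nu> * x powr \<mu> * x powr (1 - \<alpha>) = 1"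
      proof -
        have "x * x powr \<nu> * x powr \<mu> * x powr (1 - \<alpha>) = x powr 1 * x powr \<nu> * x powr \<mu> * x powr (1 - \<alpha>)"
          using x by simp
        also have "\<dots> = x powr (1 + \<nu> + \<mu> + (1 - \<alpha>))" by (simp only: powr_add)
        also have "\<dots> = x powr 0" by (rule arg_cong[where f="\<lambda>z. x powr z"]) (use s in simp)
        finally show ?thesis using x by simp
      qed
      have "c * (c powr \<nu> * (c - 1) powr \<mu> * (c - t) powr (- 1 - \<mu> - \<nu>)) =
          (1 - x) powr \<mu> * (1 - t * x) powr (1 - \<alpha>) / (x * x powr \<nu> * x powr \<mu> * x powr (1 - \<alpha>))"
        unfolding ex2 p1 p2 p3 using x by (simp add: c_def field_simps)
      also have "\<dots> = (1 - x) powr \<mu> * (1 - t * x) powr (1 - \<alpha>)" unfolding px by simp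
      finally show ?thesis .
    qed
    have "A * (c * L) + B * (c * R) = Gamma (\<alpha> - 1) * ((1 - x) powr \<mu> * (1 - t * x) powr (1 - \<alpha>))"
      unfolding val1 LR val2[symmetric] by (simp add: mult_ac)
    thus ?thesis using S eqn by simp
  qed
  have "Lam = bco \<alpha> \<mu> \<nu> t"
  proof (rule powser_unique[of 1])
    fix x :: real assume "0 < x" "x < 1"
    thus "(\<lambda>n. Lam n * x ^ n) sums (Gamma (\<alpha> - 1) * ((1 - x) powr \<mu> * (1 - t * x) powr (1 - \<alpha>)))" by (rule ser)
    show "(\<lambda>n. bco \<alpha> \<mu> \<nu> t n * x ^ n) sums (Gamma (\<alpha> - 1) * ((1 - x) powr \<mu> * (1 - t * x) powr (1 - \<alpha>)))"
      by (rule rhs_series[OF a mu s t \<open>0 < x\<close> \<open>x < 1\<close>])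
  qed simp
  thus ?thesis using LHS by (simp add: bco_def)
qed

end
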